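(* Let $N$ be even, $f_c$ an integer with $n=2f_c+1\le N$, $r\ge1$ an integer with $f_c\ge128r$, $Q=Q_{\mathrm{flat,1D}}$, and $x\in\mathbb{R}_+^N$ with support in $\mathcal{R}_1(3.74r,r;N,n)$. Let $z\in\mathbb{R}^N$, $s=Qx+z$, and let $\hat x$ be a solution of $\min_{\hat x\in\mathbb{R}^N}\|s-Q\hat x\|_1$ subject to $\hat x\ge0$. Set $h=\hat x-x=(h_0,\dots,h_{N-1})^T$ and $\mathcal{T}=\{l/N: h_l<0\}$. Suppose there exist $q=(q_0,\dots,q_{N-1})^T\in\mathbb{R}^N$ and $0<\rho<1$ such that $Qq=q$, $\|q\|_\infty\le1$, $q_l=0$ whenever $l/N\in\mathcal{T}$, and $q_l>2\rho$ otherwise. Then $$\|\hat x-x\|_1\le\frac{2(1-\rho)}{\rho}\,\|z\|_1.$$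
   Context: $F\in\mathbb{C}^{N\times N}$ is the DFT matrix $[F]_{k,l}=N^{-1/2}e^{-i2\pi kl/N}$, $k\in\{-N/2+1,\dots,N/2\}$, $l\in\{0,\dots,N-1\}$. $Q_{\mathrm{flat,1D}}=F^H\mathrm{diag}(\hat p_{-N/2+1},\dots,\hat p_{N/2})F$ with $\hat p_k=1$ for $|k|\le f_c$ and $0$ otherwise. $\lambda_c=1/f_c$. Entry $x_l$ is identified with the point $l/N$ of $\mathbb{T}=\mathbb{R}/\mathbb{Z}$, and the support of $x$ is the set of such points where $x_l\neq0$. A set $\mathcal{T}\subset\{0,1/N,\dots,1-1/N\}$ belongs to $\mathcal{R}_1(d,r;N,n)$ if it can be partitioned into $r$ pairwise disjoint subsets $\mathcal{T}_1,\dots,\mathcal{T}_r$ such that each interval of $\mathbb{T}$ of length $d\lambda_c/2$ contains at most one point of each $\mathcal{T}_i$. *)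

theory Defs
  imports "HOL-Analysis.Analysis"
begin

text \<open>Vectors in R^N / C^N are functions on indices 0..N-1 (values outside are irrelevant).
DFT matrix with row index k in {-N/2+1..N/2}, column index l in {0..N-1}.\<close>

definition dft :: "nat \<Rightarrow> int \<Rightarrow> nat \<Rightarrow> complex" where
  "dft N k l = complex_of_real (1 / sqrt (real N)) *
      exp (- \<i> * complex_of_real (2 * pi * real_of_int k * real l / real N))"

definition dft_rows :: "nat \<Rightarrow> int set" where
  "dft_rows N = {- int (N div 2) + 1 .. int (N div 2)}"

definition lowpass :: "nat \<Rightarrow> int \<Rightarrow> complex" where
  "lowpass fc k = (if \<bar>k\<bar> \<le> int fc then 1 else 0)"

text \<open>Entry (l,m) of Q_flat,1D = F^H diag(p) F.\<close>
definition Qflat :: "nat \<Rightarrow> nat \<Rightarrow> nat \<Rightarrow> nat \<Rightarrow> complex" where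
  "Qflat N fc l m = (\<Sum>k\<in>dft_rows N. cnj (dft N k l) * lowpass fc k * dft N k m)"

definition Qapp :: "nat \<Rightarrow> nat \<Rightarrow> (nat \<Rightarrow> real) \<Rightarrow> nat \<Rightarrow> complex" where
  "Qapp N fc v l = (\<Sum>m<N. Qflat N fc l m * complex_of_real (v m))"

text \<open>Closed arc of the torus R/Z of length L starting at a (points represented in [0,1)).\<close>
definition torus_arc :: "real \<Rightarrow> real \<Rightarrow> real set" where
  "torus_arc a L = {t. 0 \<le> t \<and> t < 1 \<and> frac (t - a) \<le> L}"

text \<open>R_1(d,r;N,n) with f_c = (n-1)/2 and lambda_c = 1/f_c.\<close>
definition R1 :: "real \<Rightarrow> nat \<Rightarrow> nat \<Rightarrow> nat \<Rightarrow> real set set" where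
  "R1 d r N n = {T. T \<subseteq> {real l / real N | l. l < N} \<and>
     (\<exists>P :: nat \<Rightarrow> real set. (\<Union>i<r. P i) = T \<and>
        (\<forall>i<r. \<forall>j<r. i \<noteq> j \<longrightarrow> P i \<inter> P j = {}) \<and>
        (\<forall>i<r. \<forall>a. card (P i \<inter> torus_arc a (d * (1 / ((real n - 1) / 2)) / 2)) \<le> 1))}"

definition support_pts :: "nat \<Rightarrow> (nat \<Rightarrow> real) \<Rightarrow> real set" where
  "support_pts N x = {real l / real N | l. l < N \<and> x l \<noteq> 0}"

end

theory Submission
  imports Defs
begin

lemma geo_root:
  fixes N :: nat and k :: int
  assumes N: "N > 0" and k: "k \<noteq> 0" "\<bar>k\<bar> < int N"
  shows "(\<Sum>l<N. exp (\<i> * complex_of_real (2 * pi * real_of_int k * real l / real N))) = 0"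
proof -
  define w where "w = exp (\<i> * complex_of_real (2 * pi * real_of_int k / real N))"
  have e: "exp (\<i> * complex_of_real (2 * pi * real_of_int k * real l / real N)) = w ^ l" for l
  proof -
    have "\<i> * complex_of_real (2 * pi * real_of_int k * real l / real N)
        = of_nat l * (\<i> * complex_of_real (2 * pi * real_of_int k / real N))"
      by (simp add: field_simps)
    then show ?thesis unfolding w_def by (metis exp_of_nat_mult)
  qed
  have wN: "w ^ N = 1"
  proof -
    have a: "w ^ N = exp (of_nat N * (\<i> * complex_of_real (2 * pi * real_of_int k / real N)))"
      unfolding w_def by (metis exp_of_nat_mult)
    have b: "of_nat N * (\<i> * complex_of_real (2 * pi * real_of_int k / real N))
        = (2 * of_int k * pi) * \<i>" using N by (simp add: field_simps)
    have c: "exp ((2 * of_int k * pi) * \<i>) = 1" by (rule exp_integer_2pi) simp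
    show ?thesis using a b c by simp
  qed
  have w1: "w \<noteq> 1"
  proof
    assume "w = 1"
    then obtain n :: int where n: "2 * pi * real_of_int k / real N = of_int (2 * n) * pi"
      unfolding w_def exp_eq_1 by auto
    then have "real_of_int k = real_of_int n * real N" using N by (simp add: field_simps)
    then have kn: "k = n * int N" by (metis of_int_eq_iff of_int_mult of_int_of_nat_eq)
    show False
    proof (cases "n = 0")
      case True then show False using kn k by simp
    next
      case False
      then have "\<bar>n * int N\<bar> \<ge> int N" using N by (simp add: abs_mult mult_le_cancel_right1)
      then show False using kn k by simp
    qed
  qed
  show ?thesis unfolding e using wN w1 by (simp add: sum_gp_strict)
qed

lemma Q_herm: "cnj (Qflat N fc l m) = Qflat N fc m l"
  unfolding Qflat_def cnj_sum
  by (rule sum.cong) (auto simp: lowpass_def)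

lemma cnj_dft: "cnj (dft N k l) = complex_of_real (1 / sqrt (real N)) *
      exp (\<i> * complex_of_real (2 * pi * real_of_int k * real l / real N))"
  unfolding dft_def by (simp add: exp_cnj)

lemma sum_cnj_dft:
  assumes N: "N > 0" "even N" and k: "k \<in> dft_rows N"
  shows "(\<Sum>l<N. cnj (dft N k l)) = (if k = 0 then complex_of_real (sqrt (real N)) else 0)"
proof (cases "k = 0")
  case True
  have "(\<Sum>l<N. cnj (dft N k l)) = of_nat N * complex_of_real (1 / sqrt (real N))"
    using True by (simp add: cnj_dft)
  also have "\<dots> = complex_of_real (real N / sqrt (real N))" by simp
  also have "real N / sqrt (real N) = sqrt (real N)" using N by (simp add: real_div_sqrt)
  finally show ?thesis using True by simp
next
  case False
  have "\<bar>k\<bar> < int N" using k N unfolding dft_rows_def by auto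
  then have "(\<Sum>l<N. cnj (dft N k l)) = complex_of_real (1 / sqrt (real N)) *
     (\<Sum>l<N. exp (\<i> * complex_of_real (2 * pi * real_of_int k * real l / real N)))"
    by (simp only: cnj_dft sum_distrib_left)
  then show ?thesis using False geo_root[OF N(1) False] \<open>\<bar>k\<bar> < int N\<close> by simp
qed

lemma colsum:
  assumes N: "N > 0" "even N"
  shows "(\<Sum>l<N. Qflat N fc l m) = 1"
proof -
  have "(\<Sum>l<N. Qflat N fc l m) = (\<Sum>k\<in>dft_rows N. (\<Sum>l<N. cnj (dft N k l)) * (lowpass fc k * dft N k m))"
    unfolding Qflat_def sum_distrib_right by (subst sum.swap) (simp add: mult.assoc)
  also have "\<dots> = (\<Sum>k\<in>dft_rows N. if k = 0 then complex_of_real (sqrt (real N)) * (lowpass fc k * dft N k m) else 0)"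
    by (rule sum.cong) (auto simp: sum_cnj_dft[OF N])
  also have "\<dots> = complex_of_real (sqrt (real N)) * (lowpass fc 0 * dft N 0 m)"
  proof -
    have "0 \<in> dft_rows N" using N unfolding dft_rows_def by auto
    then show ?thesis by (simp add: sum.delta[OF finite_atLeastAtMost_int] dft_rows_def)
  qed
  also have "\<dots> = 1" using N
    by (simp add: lowpass_def dft_def of_real_mult[symmetric] del: of_real_mult)
  finally show ?thesis .
qed

lemma Qapp_diff: "Qapp N fc a l - Qapp N fc b l = Qapp N fc (\<lambda>m. a m - b m) l"
  unfolding Qapp_def by (simp add: sum_subtractf[symmetric] algebra_simps)

lemma inner_W:
  assumes c: "\<forall>m<N. (\<Sum>l<N. complex_of_real (c l) * Qflat N fc l m) = complex_of_real (c m)"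
  shows "(\<Sum>l<N. complex_of_real (c l) * Qapp N fc h l) = complex_of_real (\<Sum>m<N. c m * h m)"
proof -
  have "(\<Sum>l<N. complex_of_real (c l) * Qapp N fc h l)
      = (\<Sum>m<N. (\<Sum>l<N. complex_of_real (c l) * Qflat N fc l m) * complex_of_real (h m))"
    unfolding Qapp_def sum_distrib_left sum_distrib_right
    by (subst sum.swap) (simp add: mult.assoc)
  also have "\<dots> = (\<Sum>m<N. complex_of_real (c m) * complex_of_real (h m))"
    using c by (intro sum.cong) auto
  finally show ?thesis by simp
qed

lemma big_support_false:
  assumes N: "2 * fc + 1 \<le> N" and r: "r \<ge> 1" and fc: "fc \<ge> 128 * r"
    and all: "\<forall>l<N. x l \<noteq> 0"
    and R: "support_pts N x \<in> R1 (3.74 * real r) r N (2 * fc + 1)"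
  shows False
proof -
  define T where "T = support_pts N x"
  define L where "L = 3.74 * real r * (1 / ((real (2 * fc + 1) - 1) / 2)) / 2"
  from R obtain P where PU: "(\<Union>i<r. P i) = T"
    and Pc: "\<forall>i<r. card (P i \<inter> torus_arc 0 L) \<le> 1"
  proof -
    from R have "\<exists>P :: nat \<Rightarrow> real set. (\<Union>i<r. P i) = T \<and>
        (\<forall>i<r. \<forall>a. card (P i \<inter> torus_arc a L) \<le> 1)"
      unfolding R1_def T_def L_def by auto
    then show ?thesis using that by blast
  qed
  have fcpos: "fc > 0" using fc r by linarith
  have L: "L = 1.87 * real r / real fc" unfolding L_def using fcpos by (simp add: field_simps)
  have rN: "r < N" using N fc by linarith
  define S where "S = (\<lambda>l. real l / real N) ` {..r}"
  have Npos: "N > 0" using rN by simp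
  have cardS: "card S = r + 1"
    unfolding S_def using Npos by (subst card_image) (auto simp: inj_on_def)
  have Tfin: "finite T" unfolding T_def support_pts_def
    by (rule finite_subset[of _ "(\<lambda>l. real l / real N) ` {..<N}"]) auto
  have "S \<subseteq> (\<Union>i<r. P i \<inter> torus_arc 0 L)"
  proof
    fix t assume "t \<in> S"
    then obtain l where l: "l \<le> r" "t = real l / real N" unfolding S_def by auto
    have "t \<in> T" unfolding T_def support_pts_def using l rN all by auto
    moreover have "t \<in> torus_arc 0 L"
    proof -
      have t0: "0 \<le> t" "t < 1" using l rN by auto
      have "t \<le> real r / real N" using l Npos by (simp add: divide_right_mono)
      also have "\<dots> \<le> real r / (2 * real fc)"
        using N fcpos by (intro divide_left_mono) auto
      also have "\<dots> \<le> L" unfolding L using fcpos by (simp add: field_simps)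
      finally show ?thesis unfolding torus_arc_def using t0 by (simp add: frac_eq)
    qed
    ultimately show "t \<in> (\<Union>i<r. P i \<inter> torus_arc 0 L)" using PU by blast
  qed
  moreover have "finite (\<Union>i<r. P i \<inter> torus_arc 0 L)"
    by (rule finite_subset[OF _ Tfin]) (use PU in blast)
  ultimately have "card S \<le> card (\<Union>i<r. P i \<inter> torus_arc 0 L)" by (rule card_mono[rotated])
  also have "\<dots> \<le> (\<Sum>i<r. card (P i \<inter> torus_arc 0 L))" by (rule card_UN_le) simp
  also have "\<dots> \<le> (\<Sum>i<r. 1)" using Pc by (intro sum_mono) auto
  finally show False using cardS by simp
qed
theorem lemma1:
  fixes N fc r :: nat and x z xh q :: "nat \<Rightarrow> real" and \<rho> :: real
  assumes "even N"
    and "2 * fc + 1 \<le> N"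
    and "r \<ge> 1"
    and "fc \<ge> 128 * r"
    and "\<forall>l<N. x l \<ge> 0"
    and "support_pts N x \<in> R1 (3.74 * real r) r N (2 * fc + 1)"
    and "\<forall>l<N. xh l \<ge> 0"
    and "\<forall>y. (\<forall>l<N. y l \<ge> 0) \<longrightarrow>
           (\<Sum>l<N. cmod (Qapp N fc x l + complex_of_real (z l) - Qapp N fc xh l))
           \<le> (\<Sum>l<N. cmod (Qapp N fc x l + complex_of_real (z l) - Qapp N fc y l))"
    and "\<forall>l<N. Qapp N fc q l = complex_of_real (q l)"
    and "\<forall>l<N. \<bar>q l\<bar> \<le> 1"
    and "\<forall>l<N. xh l - x l < 0 \<longrightarrow> q l = 0"
    and "\<forall>l<N. \<not> (xh l - x l < 0) \<longrightarrow> q l > 2 * \<rho>"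
    and "0 < \<rho>" and "\<rho> < 1"
  shows "(\<Sum>l<N. \<bar>xh l - x l\<bar>) \<le> 2 * (1 - \<rho>) / \<rho> * (\<Sum>l<N. \<bar>z l\<bar>)"
proof -
  define h where "h l = xh l - x l" for l
  define W where "W l = Qapp N fc h l" for l
  have Npos: "N > 0" using assms(2) by simp
  have lin: "Qapp N fc x l + complex_of_real (z l) - Qapp N fc xh l = complex_of_real (z l) - W l" for l
  proof -
    have "Qapp N fc xh l - Qapp N fc x l = W l" unfolding W_def h_def by (rule Qapp_diff)
    then show ?thesis by (simp add: algebra_simps)
  qed
  have B: "(\<Sum>l<N. cmod (complex_of_real (z l) - W l)) \<le> (\<Sum>l<N. \<bar>z l\<bar>)"
    using assms(8)[rule_format, of x] assms(5) unfolding lin by simp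
  have C: "(\<Sum>l<N. cmod (W l)) \<le> 2 * (\<Sum>l<N. \<bar>z l\<bar>)"
  proof -
    have "(\<Sum>l<N. cmod (W l)) \<le> (\<Sum>l<N. cmod (complex_of_real (z l) - W l) + \<bar>z l\<bar>)"
    proof (intro sum_mono)
      fix l
      have "cmod (W l) \<le> cmod (complex_of_real (z l) - W l) + cmod (complex_of_real (z l))"
        by (metis norm_minus_commute norm_triangle_sub add.commute)
      then show "cmod (W l) \<le> cmod (complex_of_real (z l) - W l) + \<bar>z l\<bar>" by simp
    qed
    also have "\<dots> \<le> 2 * (\<Sum>l<N. \<bar>z l\<bar>)" using B by (simp add: sum.distrib)
    finally show ?thesis .
  qed
  define c where "c l = q l / \<rho> - 1" for l
  have qfix: "(\<Sum>l<N. complex_of_real (q l) * Qflat N fc l m) = complex_of_real (q m)" if m: "m < N" for m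
  proof -
    have "(\<Sum>l<N. complex_of_real (q l) * Qflat N fc l m) = cnj (Qapp N fc q m)"
      unfolding Qapp_def cnj_sum by (intro sum.cong) (auto simp: Q_herm mult.commute)
    also have "\<dots> = complex_of_real (q m)" using assms(9) m by simp
    finally show ?thesis .
  qed
  have cfix: "\<forall>m<N. (\<Sum>l<N. complex_of_real (c l) * Qflat N fc l m) = complex_of_real (c m)"
  proof (intro allI impI)
    fix m assume m: "m < N"
    have "(\<Sum>l<N. complex_of_real (c l) * Qflat N fc l m)
        = (\<Sum>l<N. complex_of_real (q l) * Qflat N fc l m) / complex_of_real \<rho> - (\<Sum>l<N. Qflat N fc l m)"
      unfolding c_def sum_divide_distrib sum_subtractf[symmetric]
      by (intro sum.cong) (auto simp: field_simps)
    also have "\<dots> = complex_of_real (c m)"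
      using qfix[OF m] colsum[OF Npos assms(1)] unfolding c_def by simp
    finally show "(\<Sum>l<N. complex_of_real (c l) * Qflat N fc l m) = complex_of_real (c m)" .
  qed
  have D: "(\<Sum>l<N. complex_of_real (c l) * W l) = complex_of_real (\<Sum>m<N. c m * h m)"
    unfolding W_def by (rule inner_W[OF cfix])
  obtain l0 where l0: "l0 < N" "\<not> h l0 < 0"
  proof (rule ccontr)
    assume "\<not> thesis"
    then have "\<forall>l<N. h l < 0" using that by auto
    then have "\<forall>l<N. x l \<noteq> 0" using assms(7) unfolding h_def by force
    then show False using big_support_false[OF assms(2,3,4) _ assms(6)] by blast
  qed
  have rho2: "\<rho> \<le> 1/2" using assms(10,12) l0 unfolding h_def by force
  have cb: "\<bar>c l\<bar> \<le> (1 - \<rho>) / \<rho>" if "l < N" for l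
  proof -
    have q: "0 \<le> q l" "q l \<le> 1" using assms(10,11,12,13) that by (force, force)
    have "q l / \<rho> \<le> 1 / \<rho>" using q assms(13) by (simp add: divide_right_mono)
    moreover have "0 \<le> q l / \<rho>" using q assms(13) by simp
    moreover have "1 \<le> (1 - \<rho>) / \<rho>" using rho2 assms(13) by (simp add: field_simps)
    ultimately show ?thesis unfolding c_def using assms(13) by (simp add: field_simps abs_le_iff)
  qed
  have ph: "\<bar>h l\<bar> \<le> c l * h l" if "l < N" for l
  proof (cases "h l < 0")
    case True
    then have "q l = 0" using assms(11) that unfolding h_def by simp
    then show ?thesis using True unfolding c_def by simp
  next
    case False
    then have "q l > 2 * \<rho>" using assms(12) that unfolding h_def by simp
    then have "c l \<ge> 1" unfolding c_def using assms(13) by (simp add: field_simps)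
    then show ?thesis using False by (simp add: mult_le_cancel_right1)
  qed
  have "(\<Sum>l<N. \<bar>xh l - x l\<bar>) = (\<Sum>l<N. \<bar>h l\<bar>)" unfolding h_def by simp
  also have "\<dots> \<le> (\<Sum>l<N. c l * h l)" using ph by (intro sum_mono) auto
  also have "\<dots> = Re (\<Sum>l<N. complex_of_real (c l) * W l)" using D by simp
  also have "\<dots> \<le> cmod (\<Sum>l<N. complex_of_real (c l) * W l)" by (rule complex_Re_le_cmod)
  also have "\<dots> \<le> (\<Sum>l<N. cmod (complex_of_real (c l) * W l))" by (rule norm_sum)
  also have "\<dots> \<le> (\<Sum>l<N. (1 - \<rho>) / \<rho> * cmod (W l))"
  proof (intro sum_mono)
    fix l assume "l \<in> {..<N}"
    show "cmod (complex_of_real (c l) * W l) \<le> (1 - \<rho>) / \<rho> * cmod (W l)"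
    proof -
      have "\<bar>c l\<bar> * cmod (W l) \<le> (1 - \<rho>) / \<rho> * cmod (W l)"
        using cb[of l] \<open>l \<in> {..<N}\<close> by (intro mult_right_mono) auto
      then show ?thesis by (simp add: norm_mult)
    qed
  qed
  also have "\<dots> = (1 - \<rho>) / \<rho> * (\<Sum>l<N. cmod (W l))" by (simp add: sum_distrib_left)
  also have "\<dots> \<le> (1 - \<rho>) / \<rho> * (2 * (\<Sum>l<N. \<bar>z l\<bar>))"
    using C assms(13,14) by (intro mult_left_mono) auto
  also have "\<dots> = 2 * (1 - \<rho>) / \<rho> * (\<Sum>l<N. \<bar>z l\<bar>)" by simp
  finally show ?thesis .
qed

end
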